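(* Let $C>0$ and let $\mu_i$ ($i\in\mathbb{N}$) and $\mu$ be finite Borel measures on $\mathbb{R}$ supported on the compact interval $[0,C]$. Suppose that $\mu_i$ converges weakly to $\mu$ and that there is $\delta>0$ with $\det(\mu_i)\geq\delta$ for all $i$. Then $\lim_{i\to\infty}\mu_i(\{0\}) = \mu(\{0\})$.
   Context: Weak convergence $\mu_i\to\mu$ means $\lim_i\int f\,d\mu_i=\int f\,d\mu$ for every bounded continuous $f\colon\mathbb{R}\to\mathbb{C}$. The Fuglede-Kadison determinant of a finite compactly supported Borel measure $\nu$ on $\mathbb{R}$ is $\det(\nu)=\exp\int_{(0,\infty)}\ln(t)\,d\nu(t)$ (interpreted as $0$ if the integral is $-\infty$). *)

theory Defs
  imports "HOL-Analysis.Analysis"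
begin

definition finite_borel_on :: "real \<Rightarrow> real measure \<Rightarrow> bool" where
  "finite_borel_on C M \<longleftrightarrow> sets M = sets borel \<and> finite_measure M \<and>
     emeasure M (UNIV - {0..C}) = 0"

definition weak_conv :: "(nat \<Rightarrow> real measure) \<Rightarrow> real measure \<Rightarrow> bool" where
  "weak_conv Ms M \<longleftrightarrow>
     (\<forall>f :: real \<Rightarrow> complex. continuous_on UNIV f \<and> bounded (range f) \<longrightarrow>
        (\<lambda>i. integral\<^sup>L (Ms i) f) \<longlonglongrightarrow> integral\<^sup>L M f)"

text \<open>Fuglede-Kadison determinant exp (integral over (0,oo) of ln t); for a finite
  compactly supported measure the integral is either finite (ln integrable on (0,oo))
  or equal to -oo, in which case the determinant is 0.\<close>
definition fk_det :: "real measure \<Rightarrow> real" where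
  "fk_det M = (if set_integrable M {0<..} ln then exp (LINT t:{0<..}|M. ln t) else 0)"

end

theory Submission
  imports Defs
begin

lemma fbo_space: "finite_borel_on C M \<Longrightarrow> space M = UNIV"
  unfolding finite_borel_on_def using sets_eq_imp_space_eq[of M borel] by simp

lemma fbo_sets: "finite_borel_on C M \<Longrightarrow> A \<in> sets borel \<Longrightarrow> A \<in> sets M"
  unfolding finite_borel_on_def by simp

lemma fbo_fin: "finite_borel_on C M \<Longrightarrow> finite_measure M"
  unfolding finite_borel_on_def by simp

lemma fbo_AE: assumes "finite_borel_on C M" shows "AE x in M. 0 \<le> x \<and> x \<le> C"
proof (rule AE_I'[of "UNIV - {0..C}"])
  have "UNIV - {0..C} \<in> sets borel" by (intro borel_open open_Diff open_UNIV closed_atLeastAtMost)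
  then have "UNIV - {0..C} \<in> sets M" by (rule fbo_sets[OF assms])
  moreover have "emeasure M (UNIV - {0..C}) = 0" using assms unfolding finite_borel_on_def by simp
  ultimately show "UNIV - {0..C} \<in> null_sets M" by (rule null_setsI[rotated])
  show "{x \<in> space M. \<not> (0 \<le> x \<and> x \<le> C)} \<subseteq> UNIV - {0..C}" by auto
qed

lemma fbo_meas: fixes f :: "real \<Rightarrow> real" assumes M: "finite_borel_on C M" and f: "f \<in> borel_measurable borel"
  shows "f \<in> borel_measurable M"
proof -
  have "sets M = sets borel" using M unfolding finite_borel_on_def by simp
  then have "measurable M borel = measurable borel (borel :: real measure)"
    by (rule measurable_cong_sets) (rule refl)
  then show ?thesis using f by simp
qed

lemma fbo_ind_int: assumes M: "finite_borel_on C M" and A: "A \<in> sets borel"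
  shows "integrable M (indicator A :: real \<Rightarrow> real)"
proof (rule integrable_real_indicator)
  show As: "A \<in> sets M" by (rule fbo_sets[OF M A])
  show "emeasure M A < \<infinity>"
    using finite_measure.emeasure_finite[OF fbo_fin[OF M], of A] by (simp add: less_top)
qed

lemma small_mass:
  assumes M: "finite_borel_on C M" and C: "C > 0"
    and si: "set_integrable M {0<..} ln" and L: "ln \<delta> \<le> (LINT t:{0<..}|M. ln t)"
    and e: "0 < \<epsilon>" "\<epsilon> < 1"
  shows "measure M {0<..\<epsilon>} * (- ln \<epsilon>) \<le> max (ln C) 0 * measure M UNIV - ln \<delta>"
proof -
  define g where "g t = ln \<epsilon> * indicator {0<..\<epsilon>} t + max (ln C) 0 * indicator {0<..} t" for t :: real
  have gi: "integrable M g" unfolding g_def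
    using fbo_ind_int[OF M, of "{0<..\<epsilon>}"] fbo_ind_int[OF M, of "{0<..}"] by auto
  have "(LINT t:{0<..}|M. ln t) \<le> integral\<^sup>L M g"
    unfolding set_lebesgue_integral_def
  proof (rule integral_mono_AE)
    show "integrable M (\<lambda>x. indicator {0<..} x *\<^sub>R ln x)" using si unfolding set_integrable_def .
    show "integrable M g" by fact
    show "AE x in M. indicator {0<..} x *\<^sub>R ln x \<le> g x"
      using fbo_AE[OF M]
    proof eventually_elim
      case (elim x)
      show ?case
      proof (cases "x > 0")
        case True
        show ?thesis
        proof (cases "x \<le> \<epsilon>")
          case True
          have l: "ln x \<le> ln \<epsilon>" using \<open>x>0\<close> True by simp
          have l2: "ln x \<le> ln \<epsilon> + max (ln C) 0" using l by linarith
          have "g x = ln \<epsilon> + max (ln C) 0" "indicator {0<..} x = (1::real)"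
            using \<open>x>0\<close> True by (auto simp: g_def)
          then show ?thesis using l2 by (simp del: ln_le_cancel_iff)
        next
          case False
          have "ln x \<le> ln C" using \<open>x>0\<close> elim by simp
          then show ?thesis using \<open>x>0\<close> False by (simp add: g_def)
        qed
      qed (auto simp: g_def)
    qed
  qed
  also have "integral\<^sup>L M g = ln \<epsilon> * measure M {0<..\<epsilon>} + max (ln C) 0 * measure M {0<..}"
    unfolding g_def using fbo_ind_int[OF M, of "{0<..\<epsilon>}"] fbo_ind_int[OF M, of "{0<..}"]
    by (simp add: fbo_space[OF M])
  also have "max (ln C) 0 * measure M {0<..} \<le> max (ln C) 0 * measure M UNIV"
    using fbo_fin[OF M] fbo_space[OF M]
    by (intro mult_left_mono) (auto intro!: finite_measure.finite_measure_mono fbo_sets[OF M])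
  finally show ?thesis using L by (simp add: algebra_simps)
qed


definition gfun :: "real \<Rightarrow> real \<Rightarrow> real" where
  "gfun \<epsilon> x = max 0 (min 1 (1 - x * inverse \<epsilon>))"

lemma gfun_cont: "continuous_on UNIV (gfun \<epsilon>)"
  unfolding gfun_def by (intro continuous_intros)

lemma gfun_bnd: "\<bar>gfun \<epsilon> x\<bar> \<le> 1"
  unfolding gfun_def by auto

lemma gfun_props:
  assumes M: "finite_borel_on C M" and e: "\<epsilon> > 0"
  shows "integrable M (gfun \<epsilon>)" "measure M {0} \<le> integral\<^sup>L M (gfun \<epsilon>)"
    "integral\<^sup>L M (gfun \<epsilon>) \<le> measure M {0} + measure M {0<..\<epsilon>}"
proof -
  have fm: "finite_measure M" using fbo_fin[OF M] .
  show gi: "integrable M (gfun \<epsilon>)"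
    by (rule finite_measure.integrable_const_bound[OF fm, where B=1])
       (auto simp: gfun_bnd intro!: fbo_meas[OF M] borel_measurable_continuous_onI gfun_cont)
  have i0: "integrable M (indicator {0} :: real \<Rightarrow> real)" by (rule fbo_ind_int[OF M]) auto
  have i1: "integrable M (indicator {0<..\<epsilon>} :: real \<Rightarrow> real)" by (rule fbo_ind_int[OF M]) auto
  have "integral\<^sup>L M (indicator {0} :: real \<Rightarrow> real) \<le> integral\<^sup>L M (gfun \<epsilon>)"
  proof (rule integral_mono_AE[OF i0 gi])
    show "AE x in M. indicator {0} x \<le> gfun \<epsilon> x"
      using fbo_AE[OF M] by eventually_elim (auto simp: gfun_def indicator_def)
  qed
  then show "measure M {0} \<le> integral\<^sup>L M (gfun \<epsilon>)" by (simp add: fbo_space[OF M])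
  have "integral\<^sup>L M (gfun \<epsilon>) \<le> integral\<^sup>L M (\<lambda>x. indicator {0} x + indicator {0<..\<epsilon>} x :: real)"
  proof (rule integral_mono_AE[OF gi])
    show "integrable M (\<lambda>x. indicator {0} x + indicator {0<..\<epsilon>} x :: real)" using i0 i1 by auto
    show "AE x in M. gfun \<epsilon> x \<le> indicator {0} x + indicator {0<..\<epsilon>} x"
      using fbo_AE[OF M]
    proof eventually_elim
      case (elim x)
      then consider "x = 0" | "0 < x \<and> x \<le> \<epsilon>" | "\<epsilon> < x" by linarith
      then show ?case
      proof cases
        case 3
        then have "1 - x * inverse \<epsilon> < 0" using e by (simp add: field_simps)
        then show ?thesis by (simp add: gfun_def indicator_def)
      qed (auto simp: gfun_def indicator_def)
    qed
  qed
  then show "integral\<^sup>L M (gfun \<epsilon>) \<le> measure M {0} + measure M {0<..\<epsilon>}"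
    using i0 i1 by (simp add: fbo_space[OF M])
qed

lemma weak_real:
  fixes g :: "real \<Rightarrow> real"
  assumes W: "weak_conv Ms M" and c: "continuous_on UNIV g" and b: "\<And>x. \<bar>g x\<bar> \<le> B"
  shows "(\<lambda>i. integral\<^sup>L (Ms i) g) \<longlonglongrightarrow> integral\<^sup>L M g"
proof -
  have "continuous_on UNIV (\<lambda>x. complex_of_real (g x))"
    using c by (intro continuous_intros)
  moreover have "bounded (range (\<lambda>x. complex_of_real (g x)))"
    unfolding bounded_iff using b by auto
  ultimately have "(\<lambda>i. integral\<^sup>L (Ms i) (\<lambda>x. complex_of_real (g x))) \<longlonglongrightarrow> integral\<^sup>L M (\<lambda>x. complex_of_real (g x))"
    using W unfolding weak_conv_def by blast
  then have "(\<lambda>i. Re (integral\<^sup>L (Ms i) (\<lambda>x. complex_of_real (g x)))) \<longlonglongrightarrow> Re (integral\<^sup>L M (\<lambda>x. complex_of_real (g x)))"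
    by (rule tendsto_Re)
  then show ?thesis by simp
qed

theorem mainTheorem3:
  fixes C \<delta> :: real and \<mu>s :: "nat \<Rightarrow> real measure" and \<mu> :: "real measure"
  assumes "C > 0"
    and "\<And>i. finite_borel_on C (\<mu>s i)"
    and "finite_borel_on C \<mu>"
    and "weak_conv \<mu>s \<mu>"
    and "\<delta> > 0"
    and "\<And>i. fk_det (\<mu>s i) \<ge> \<delta>"
  shows "(\<lambda>i. measure (\<mu>s i) {0}) \<longlonglongrightarrow> measure \<mu> {0}"
proof -
  note Ms = assms(2) and M = assms(3) and W = assms(4)
  have "(\<lambda>i. integral\<^sup>L (\<mu>s i) (\<lambda>_. 1::real)) \<longlonglongrightarrow> integral\<^sup>L \<mu> (\<lambda>_. 1::real)"
    by (rule weak_real[OF W, where B=1]) auto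
  then have "Bseq (\<lambda>i. integral\<^sup>L (\<mu>s i) (\<lambda>_. 1::real))"
    by (rule convergent_imp_Bseq[OF convergentI])
  then obtain B where B: "\<And>i. norm (integral\<^sup>L (\<mu>s i) (\<lambda>_. 1::real)) \<le> B"
    by (rule BseqE) blast
  have mB: "measure (\<mu>s i) UNIV \<le> B" for i
    using B[of i] by (simp add: fbo_space[OF Ms])
  define K where "K = max (ln C) 0 * B - ln \<delta>"
  define A where "A n = {0<..exp (- (real n + 1))}" for n :: nat
  have small: "measure (\<mu>s i) (A n) \<le> K / real (Suc n)" for i n
  proof -
    have fk: "\<delta> \<le> fk_det (\<mu>s i)" by (rule assms(6))
    have si: "set_integrable (\<mu>s i) {0<..} ln"
      using fk \<open>\<delta> > 0\<close> unfolding fk_det_def by (auto split: if_splits)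
    then have "\<delta> \<le> exp (LINT t:{0<..}|(\<mu>s i). ln t)" using fk unfolding fk_det_def by simp
    then have "ln \<delta> \<le> ln (exp (LINT t:{0<..}|(\<mu>s i). ln t))"
      using \<open>\<delta> > 0\<close> by (subst ln_le_cancel_iff) auto
    then have L: "ln \<delta> \<le> (LINT t:{0<..}|(\<mu>s i). ln t)" by simp
    have e1: "exp (- (real n + 1)) < 1" by simp
    have "measure (\<mu>s i) (A n) * (real n + 1) \<le> max (ln C) 0 * measure (\<mu>s i) UNIV - ln \<delta>"
      using small_mass[OF Ms \<open>C>0\<close> si L exp_gt_zero e1] unfolding A_def by (simp add: algebra_simps)
    also have "\<dots> \<le> K" unfolding K_def using mB[of i] by (intro diff_right_mono mult_left_mono) auto
    finally show ?thesis by (simp add: pos_le_divide_eq add.commute)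
  qed
  have KT: "(\<lambda>n. K / real (Suc n)) \<longlonglongrightarrow> 0"
    using LIMSEQ_Suc[OF lim_const_over_n[of K]] by simp
  have dec: "decseq A" unfolding A_def decseq_def
  proof (intro allI impI subsetI)
    fix m n :: nat and x :: real assume mn: "m \<le> n" and x: "x \<in> {0<..exp (- (real n + 1))}"
    have "exp (- (real n + 1)) \<le> exp (- (real m + 1))" using mn by simp
    moreover have "x \<le> exp (- (real n + 1))" "0 < x" using x by auto
    ultimately have "x \<le> exp (- (real m + 1))" by linarith
    then show "x \<in> {0<..exp (- (real m + 1))}" using \<open>0 < x\<close> by simp
  qed
  have inter: "(\<Inter>n. A n) = {}"
  proof (rule ccontr)
    assume "(\<Inter>n. A n) \<noteq> {}"
    then obtain x where x: "\<And>n. x \<in> A n" by blast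
    then have x0: "x > 0" unfolding A_def by auto
    obtain n :: nat where n: "- ln x < real n" using reals_Archimedean2 by blast
    have "x \<le> exp (- (real n + 1))" using x[of n] unfolding A_def by simp
    then have "ln x \<le> ln (exp (- (real n + 1)))" using x0 by (subst ln_le_cancel_iff) auto
    then have "ln x \<le> - (real n + 1)" by simp
    then show False using n by linarith
  qed
  have rA: "range A \<subseteq> sets \<mu>" using fbo_sets[OF M] unfolding A_def by auto
  have MT: "(\<lambda>n. measure \<mu> (A n)) \<longlonglongrightarrow> 0"
    using finite_measure.finite_Lim_measure_decseq[OF fbo_fin[OF M] rA dec] inter by simp
  show ?thesis
  proof (rule LIMSEQ_I)
    fix r :: real assume "r > 0"
    define e where "e = r / 3"
    have e0: "e > 0" using \<open>r>0\<close> by (simp add: e_def)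
    obtain N1 where N1: "\<And>n. n \<ge> N1 \<Longrightarrow> norm (K / real (Suc n) - 0) < e"
      using LIMSEQ_D[OF KT e0] by blast
    obtain N2 where N2: "\<And>n. n \<ge> N2 \<Longrightarrow> norm (measure \<mu> (A n) - 0) < e"
      using LIMSEQ_D[OF MT e0] by blast
    define n where "n = max N1 N2"
    define \<epsilon> where "\<epsilon> = exp (- (real n + 1))"
    have ep: "\<epsilon> > 0" by (simp add: \<epsilon>_def)
    have An: "A n = {0<..\<epsilon>}" by (simp add: A_def \<epsilon>_def)
    have nN: "N1 \<le> n" "N2 \<le> n" by (auto simp: n_def)
    have Ke: "K / real (Suc n) < e"
      using N1[OF nN(1)] abs_ge_self[of "K / real (Suc n)"] unfolding real_norm_def diff_0_right
      by linarith
    have s1: "measure (\<mu>s i) {0<..\<epsilon>} < e" for i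
      using small[of i n] Ke An by simp
    have s2: "measure \<mu> {0<..\<epsilon>} < e"
      using N2[OF nN(2)] abs_ge_self[of "measure \<mu> (A n)"] An unfolding real_norm_def diff_0_right
      by simp
    have GT: "(\<lambda>i. integral\<^sup>L (\<mu>s i) (gfun \<epsilon>)) \<longlonglongrightarrow> integral\<^sup>L \<mu> (gfun \<epsilon>)"
      by (rule weak_real[OF W gfun_cont gfun_bnd])
    obtain N3 where N3: "\<And>i. i \<ge> N3 \<Longrightarrow> norm (integral\<^sup>L (\<mu>s i) (gfun \<epsilon>) - integral\<^sup>L \<mu> (gfun \<epsilon>)) < e"
      using LIMSEQ_D[OF GT e0] by blast
    show "\<exists>no. \<forall>i\<ge>no. norm (measure (\<mu>s i) {0} - measure \<mu> {0}) < r"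
    proof (intro exI allI impI)
      fix i assume "i \<ge> N3"
      note d = N3[OF this]
      note g1 = gfun_props[OF Ms[of i] ep] and g2 = gfun_props[OF M ep]
      have "measure (\<mu>s i) {0<..\<epsilon>} \<ge> 0" "measure \<mu> {0<..\<epsilon>} \<ge> 0" by auto
      have r3: "r = 3 * e" by (simp add: e_def)
      show "norm (measure (\<mu>s i) {0} - measure \<mu> {0}) < r"
        using d g1(2,3) g2(2,3) s1[of i] s2 r3 unfolding real_norm_def abs_less_iff by linarith
    qed
  qed
qed

end
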